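(* Let $n\ge 1$ and let $B$ be the $n\times n$ upper bidiagonal matrix with diagonal entries $B_{kk}=k^2$ for $k=1,\ldots,n$, superdiagonal entries $B_{k,k+1}=-(k+1)(n-k)$ for $k=1,\ldots,n-1$, and all other entries zero. Let $M=[m_{kj}]$ be the $n\times n$ lower-triangular matrix whose entries are $$m_{kj}=\frac{(j+1)_{k-j}\,(n-k+1)_{k-j}}{(2j+1)_{k-j}\,(k-j)!}\quad\text{for } k\ge j,\qquad m_{kj}=0\quad\text{for } k<j,$$ where $(x)_m=x(x+1)\cdots(x+m-1)$ (with $(x)_0=1$). Then $S=M^T$ diagonalizes $B$, namely $S$ is invertible and $SBS^{-1}=\Lambda=\mathrm{Diag}(1^2,2^2,\ldots,n^2)$.
   Context: $(x)_m$ denotes the (rising) Pochhammer symbol. In the paper, $B=VP^{-2}V^{-1}$ where $P$ is the $n\times n$ matrix with $P_{ij}=1/i$ for $j\ge n-i+1$ and $0$ otherwise, and $V_{ij}=(-1)^{i-j}\binom{i-1}{j-1}$ for $i\ge j$; the statement above only concerns the explicit bidiagonal $B$. *)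

theory Defs
  imports Complex_Main "Jordan_Normal_Form.Matrix"
begin

text \<open>All matrices are n x n real matrices of the Jordan_Normal_Form library,
  whose indices are 0-based; entry (i,j) corresponds to the paper's (i+1,j+1).\<close>

definition B_entry :: "nat \<Rightarrow> nat \<Rightarrow> nat \<Rightarrow> real" where
  "B_entry n k j =
     (if j = k then real (k^2)
      else if j = k + 1 then - (real (k + 1) * real (n - k))
      else 0)"

definition m_entry :: "nat \<Rightarrow> nat \<Rightarrow> nat \<Rightarrow> real" where
  "m_entry n k j =
     (if j \<le> k then
        pochhammer (real (j + 1)) (k - j) * pochhammer (real (n - k + 1)) (k - j)
        / (pochhammer (real (2 * j + 1)) (k - j) * fact (k - j))
      else 0)"

definition Bmat :: "nat \<Rightarrow> real mat" where
  "Bmat n = mat n n (\<lambda>(i, j). B_entry n (i + 1) (j + 1))"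

definition Mmat :: "nat \<Rightarrow> real mat" where
  "Mmat n = mat n n (\<lambda>(i, j). m_entry n (i + 1) (j + 1))"

definition Lambda_mat :: "nat \<Rightarrow> real mat" where
  "Lambda_mat n = mat_diag n (\<lambda>i. real ((i + 1)^2))"

end

theory Submission
  imports Defs "Jordan_Normal_Form.Determinant"
begin

lemma alg:
  fixes X Y Z F N a b :: real
  assumes "Z \<noteq> 0" "F \<noteq> 0" "2*a+b+1 \<noteq> 0" "b+1 \<noteq> 0"
  shows "X * (a + b + 1) * (N * Y) / (Z * (2*a + b + 1) * ((b + 1) * F)) * ((a + b + 1)^2 - a^2)
     = X * Y / (Z * F) * (a + b + 1) * N"
proof -
  have e: "(a + b + 1)^2 - a^2 = (b+1)*(2*a+b+1)" by (simp add: power2_eq_square algebra_simps)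
  have g: "\<And>W D c::real. c \<noteq> 0 \<Longrightarrow> W / (D * c) * c = W / D" by simp
  have dd: "Z * (2*a + b + 1) * ((b + 1) * F) = (Z * F) * ((b+1)*(2*a+b+1))" by (simp add: algebra_simps)
  have "X * (a + b + 1) * (N * Y) / (Z * (2*a + b + 1) * ((b + 1) * F)) * ((b+1)*(2*a+b+1))
     = X * (a + b + 1) * (N * Y) / (Z * F)"
    unfolding dd by (rule g) (use assms in simp)
  then show ?thesis unfolding e by (simp add: algebra_simps)
qed

lemma key:
  assumes "Suc p \<le> n" "j \<ge> 1"
  shows "m_entry n (Suc p) j * ((real (Suc p))^2 - (real j)^2)
         = m_entry n p j * real (Suc p) * real (n - p)"
proof (cases "j \<le> p")
  case True
  define e where "e = p - j"
  have d1: "Suc p - j = Suc e" using True e_def by simp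
  have d0: "p - j = e" using e_def by simp
  have nn: "n - Suc p + 1 = n - p" using assms by simp
  have sp: "real (Suc p) = real j + real e + 1" using True e_def by simp
  have A: "pochhammer (real (j + 1)) (Suc e) = pochhammer (real (j + 1)) e * (real j + real e + 1)"
    by (simp add: pochhammer_Suc)
  have Bq: "pochhammer (real (n - p)) (Suc e) = real (n - p) * pochhammer (real (n - p + 1)) e"
    by (simp add: pochhammer_rec add.commute)
  have C: "pochhammer (real (2*j + 1)) (Suc e) = pochhammer (real (2*j + 1)) e * (2*real j + real e + 1)"
    by (simp add: pochhammer_Suc)
  have pz: "pochhammer (real (2*j + 1)) e \<noteq> 0"
    using pochhammer_pos[of "real (2*j+1)" e] by simp
  have fz: "(fact e :: real) \<noteq> 0" by simp
  have l0: "m_entry n (Suc p) j = pochhammer (real (j + 1)) (Suc e) * pochhammer (real (n - p)) (Suc e)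
      / (pochhammer (real (2*j + 1)) (Suc e) * fact (Suc e))"
    unfolding m_entry_def d1 nn using True by simp
  have l: "m_entry n (Suc p) j = pochhammer (real (j + 1)) e * (real j + real e + 1)
      * (real (n - p) * pochhammer (real (n - p + 1)) e)
      / (pochhammer (real (2*j + 1)) e * (2*real j + real e + 1) * ((real e + 1) * fact e))"
    unfolding l0 A Bq C fact_Suc by (simp add: add.commute)
  have r: "m_entry n p j = pochhammer (real (j + 1)) e * pochhammer (real (n - p + 1)) e
      / (pochhammer (real (2*j + 1)) e * fact e)"
    unfolding m_entry_def using True d0 by simp
  have q1: "2*real j + real e + 1 \<noteq> 0" by (smt (verit) of_nat_0_le_iff)
  have q2: "real e + 1 \<noteq> 0" by (smt (verit) of_nat_0_le_iff)
  show ?thesis unfolding l r sp using alg[OF pz fz q1 q2] by simp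
next
  case False
  then have "j = Suc p \<or> j > Suc p" by auto
  then show ?thesis
  proof
    assume "j = Suc p" then show ?thesis using False by (simp add: m_entry_def)
  next
    assume "j > Suc p" then show ?thesis by (simp add: m_entry_def)
  qed
qed

lemma sumB:
  fixes g :: "nat \<Rightarrow> real"
  assumes "j < n"
  shows "(\<Sum>k\<in>{0..<n}. g k * B_entry n (k+1) (j+1))
    = g j * real ((j+1)^2) + (if 0 < j then g (j-1) * (-(real (j+1) * real (n-j))) else 0)"
proof -
  have pt: "\<And>k. g k * B_entry n (k+1) (j+1) =
     (if k = j then g j * real ((j+1)^2) else 0) +
     (if k = j - 1 \<and> 0 < j then g (j-1) * (-(real (j+1) * real (n-j))) else 0)"
    unfolding B_entry_def by (auto simp: Suc_diff_Suc)
  have "(\<Sum>k\<in>{0..<n}. g k * B_entry n (k+1) (j+1)) =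
     (\<Sum>k\<in>{0..<n}. (if k = j then g j * real ((j+1)^2) else 0)) +
     (\<Sum>k\<in>{0..<n}. (if k = j - 1 \<and> 0 < j then g (j-1) * (-(real (j+1) * real (n-j))) else 0))"
    unfolding pt sum.distrib ..
  also have "\<dots> = g j * real ((j+1)^2) + (if 0 < j then g (j-1) * (-(real (j+1) * real (n-j))) else 0)"
    using assms by (auto simp: sum.delta' sum.neutral)
  finally show ?thesis .
qed

theorem theorem1:
  fixes n :: nat
  assumes "n \<ge> 1"
  defines "S \<equiv> transpose_mat (Mmat n)"
  shows "invertible_mat S \<and>
    (\<exists>Sinv. inverts_mat S Sinv \<and> inverts_mat Sinv S \<and> S * Bmat n * Sinv = Lambda_mat n)"
proof -
  have Sc: "S \<in> carrier_mat n n" unfolding S_def Mmat_def by simp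
  have Bc: "Bmat n \<in> carrier_mat n n" unfolding Bmat_def by simp
  have Lc: "Lambda_mat n \<in> carrier_mat n n" unfolding Lambda_mat_def by simp
  have Se: "\<And>i j. i < n \<Longrightarrow> j < n \<Longrightarrow> S $$ (i,j) = m_entry n (j+1) (i+1)"
    unfolding S_def Mmat_def by simp
  have ut: "upper_triangular S"
    by (rule upper_triangularI) (use Sc Se in \<open>auto simp: m_entry_def\<close>)
  have diag1: "\<And>i. i < n \<Longrightarrow> S $$ (i,i) = 1" using Se by (simp add: m_entry_def)
  have "det S = prod_list (diag_mat S)" by (rule det_upper_triangular[OF ut Sc])
  also have "diag_mat S = map (\<lambda>i. 1) [0..<n]" using Sc diag1 by (auto simp: diag_mat_def)
  also have "prod_list (map (\<lambda>i. 1::real) [0..<n]) = 1" by (simp add: map_replicate_const)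
  finally have dS: "det S \<noteq> 0" by simp
  from det_non_zero_imp_unit[OF Sc dS, of "()"]
  obtain Q where Qc: "Q \<in> carrier_mat n n" and QS: "Q * S = 1\<^sub>m n" and SQ: "S * Q = 1\<^sub>m n"
    unfolding Units_def ring_mat_def by auto
  have SB: "S * Bmat n = Lambda_mat n * S"
  proof (rule eq_matI)
    fix i j assume i: "i < dim_row (Lambda_mat n * S)" and j: "j < dim_col (Lambda_mat n * S)"
    then have i: "i < n" and j: "j < n" using Lc Sc by auto
    have "(S * Bmat n) $$ (i,j) = (\<Sum>k\<in>{0..<n}. m_entry n (k+1) (i+1) * B_entry n (k+1) (j+1))"
      using i j Sc Bc Se unfolding Bmat_def by (auto simp: scalar_prod_def intro!: sum.cong)
    also have "\<dots> = m_entry n (j+1) (i+1) * real ((j+1)^2) +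
       (if 0 < j then m_entry n (j-1+1) (i+1) * (-(real (j+1) * real (n-j))) else 0)"
      by (rule sumB[OF j])
    also have "\<dots> = m_entry n (j+1) (i+1) * real ((j+1)^2) - m_entry n j (i+1) * real (Suc j) * real (n-j)"
      by (cases j) (auto simp: m_entry_def)
    also have "\<dots> = real ((i+1)^2) * m_entry n (j+1) (i+1)"
      using key[of j n "i+1"] j by (simp add: algebra_simps)
    also have "\<dots> = (Lambda_mat n * S) $$ (i,j)"
      unfolding Lambda_mat_def mat_diag_mult_left[OF Sc] using i j Se by simp
    finally show "(S * Bmat n) $$ (i,j) = (Lambda_mat n * S) $$ (i,j)" .
  qed (use Sc Bc Lc in auto)
  have "S * Bmat n * Q = Lambda_mat n * S * Q" by (simp add: SB)
  also have "\<dots> = Lambda_mat n * (S * Q)" using Lc Sc Qc by (simp add: assoc_mult_mat)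
  also have "\<dots> = Lambda_mat n" using SQ Lc by simp
  finally have fin: "S * Bmat n * Q = Lambda_mat n" .
  have i1: "inverts_mat S Q" using SQ Sc unfolding inverts_mat_def by simp
  have i2: "inverts_mat Q S" using QS Qc unfolding inverts_mat_def by simp
  show ?thesis unfolding invertible_mat_def using i1 i2 fin Sc by auto
qed

end
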